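(* Let $v$ be a weight on $\mathbb D$ and let $(X,\|\cdot\|)$ be a Banach space of analytic functions in $\mathbb D$. Let $\varphi$ be an entire function. If the superposition operator $S_\varphi$ is a bounded operator from $X$ into $H^\infty_v$, then $S_{\varphi'}$ maps $X$ into $H^\infty_v$, i.e. $\varphi'\circ f\in H^\infty_v$ for every $f\in X$.
   Context: For $\varphi$ entire, $S_\varphi(f)=\varphi\circ f$ for $f$ analytic in the unit disc $\mathbb D$. A weight on $\mathbb D$ is a positive continuous function $v$ on $\mathbb D$ which is radial ($v(z)=v(|z|)$), with $r\mapsto v(r)$ strictly decreasing on $[0,1)$ and $\lim_{r\to1}v(r)=0$. $H^\infty_v=\{f \text{ analytic in }\mathbb D:\|f\|_v=\sup_{z\in\mathbb D}v(z)|f(z)|<\infty\}$. "Bounded" for the (nonlinear) operator $S_\varphi$ means that it maps $X$ into $H^\infty_v$ and maps bounded subsets of $X$ to bounded subsets of $H^\infty_v$. *)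

theory Defs
  imports "HOL-Analysis.Analysis"
begin

definition weight :: "(complex \<Rightarrow> real) \<Rightarrow> bool" where
  "weight v \<longleftrightarrow>
     continuous_on (ball 0 1) v \<and>
     (\<forall>z\<in>ball 0 1. v z > 0) \<and>
     (\<forall>z\<in>ball 0 1. v z = v (complex_of_real (norm z))) \<and>
     strict_antimono_on {0..<1} (\<lambda>r::real. v (complex_of_real r)) \<and>
     ((\<lambda>r::real. v (complex_of_real r)) \<longlongrightarrow> 0) (at_left 1)"

definition wnorm :: "(complex \<Rightarrow> real) \<Rightarrow> (complex \<Rightarrow> complex) \<Rightarrow> real" where
  "wnorm v f = (SUP z\<in>ball 0 1. v z * cmod (f z))"

definition Hinf_v :: "(complex \<Rightarrow> real) \<Rightarrow> (complex \<Rightarrow> complex) set" where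
  "Hinf_v v = {f. f holomorphic_on ball 0 1 \<and> bdd_above ((\<lambda>z. v z * cmod (f z)) ` ball 0 1)}"

text \<open>A Banach space (X, N) of analytic functions on the disc: X is a complex vector
  space of functions analytic on the disc (functions are identified when they agree on
  the disc), N is a norm on X, and X is complete for N.\<close>
definition banach_space_analytic ::
  "(complex \<Rightarrow> complex) set \<Rightarrow> ((complex \<Rightarrow> complex) \<Rightarrow> real) \<Rightarrow> bool" where
  "banach_space_analytic X N \<longleftrightarrow>
     (\<forall>f\<in>X. f holomorphic_on ball 0 1) \<and>
     (\<lambda>z. 0) \<in> X \<and>
     (\<forall>f\<in>X. \<forall>g\<in>X. (\<lambda>z. f z + g z) \<in> X) \<and>
     (\<forall>c. \<forall>f\<in>X. (\<lambda>z. c * f z) \<in> X) \<and>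
     (\<forall>f\<in>X. \<forall>g\<in>X. (\<forall>z\<in>ball 0 1. f z = g z) \<longrightarrow> N f = N g) \<and>
     (\<forall>f\<in>X. N f \<ge> 0) \<and>
     (\<forall>f\<in>X. N f = 0 \<longleftrightarrow> (\<forall>z\<in>ball 0 1. f z = 0)) \<and>
     (\<forall>f\<in>X. \<forall>g\<in>X. N (\<lambda>z. f z + g z) \<le> N f + N g) \<and>
     (\<forall>c. \<forall>f\<in>X. N (\<lambda>z. c * f z) = cmod c * N f) \<and>
     (\<forall>F::nat \<Rightarrow> complex \<Rightarrow> complex. (\<forall>n. F n \<in> X) \<and>
        (\<forall>e>0. \<exists>M. \<forall>m\<ge>M. \<forall>n\<ge>M. N (\<lambda>z. F m z - F n z) < e) \<longrightarrow>
        (\<exists>g\<in>X. (\<lambda>n. N (\<lambda>z. F n z - g z)) \<longlonglongrightarrow> 0))"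

definition superpos :: "(complex \<Rightarrow> complex) \<Rightarrow> (complex \<Rightarrow> complex) \<Rightarrow> complex \<Rightarrow> complex" where
  "superpos \<phi> f = \<phi> \<circ> f"

definition superpos_bounded ::
  "(complex \<Rightarrow> complex) \<Rightarrow> (complex \<Rightarrow> complex) set \<Rightarrow> ((complex \<Rightarrow> complex) \<Rightarrow> real)
   \<Rightarrow> (complex \<Rightarrow> real) \<Rightarrow> bool" where
  "superpos_bounded \<phi> X N v \<longleftrightarrow>
     (\<forall>f\<in>X. superpos \<phi> f \<in> Hinf_v v) \<and>
     (\<forall>B\<subseteq>X. (\<exists>R. \<forall>f\<in>B. N f \<le> R) \<longrightarrow> (\<exists>C. \<forall>f\<in>B. wnorm v (superpos \<phi> f) \<le> C))"

end

theory Submission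
  imports Defs "HOL-Complex_Analysis.Cauchy_Integral_Formula"
begin

theorem theorem4:
  fixes v :: "complex \<Rightarrow> real"
    and X :: "(complex \<Rightarrow> complex) set"
    and N :: "(complex \<Rightarrow> complex) \<Rightarrow> real"
    and \<phi> :: "complex \<Rightarrow> complex"
  assumes "weight v"
    and "banach_space_analytic X N"
    and "\<phi> holomorphic_on UNIV"
    and "superpos_bounded \<phi> X N v"
  shows "\<forall>f\<in>X. superpos (deriv \<phi>) f \<in> Hinf_v v"
proof
  fix f assume fX: "f \<in> X"
  have fh: "f holomorphic_on ball 0 1" using assms(2) fX unfolding banach_space_analytic_def by blast
  have dh: "deriv \<phi> holomorphic_on UNIV" using holomorphic_deriv[OF assms(3) open_UNIV] .
  have hol: "(deriv \<phi> \<circ> f) holomorphic_on ball 0 1"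
    using holomorphic_on_compose[OF fh, of "deriv \<phi>"] dh holomorphic_on_subset by blast
  define B where "B = {(\<lambda>z. c * f z) | c. cmod c \<le> 2}"
  have BX: "B \<subseteq> X" using assms(2) fX unfolding B_def banach_space_analytic_def by blast
  have BN: "\<forall>g\<in>B. N g \<le> 2 * N f"
  proof
    fix g assume "g \<in> B"
    then obtain c where c: "cmod c \<le> 2" "g = (\<lambda>z. c * f z)" unfolding B_def by blast
    have "N g = cmod c * N f" using assms(2) fX c(2) unfolding banach_space_analytic_def by blast
    moreover have "N f \<ge> 0" using assms(2) fX unfolding banach_space_analytic_def by blast
    ultimately show "N g \<le> 2 * N f" using c(1) by (simp add: mult_right_mono)
  qed
  obtain C where C: "\<forall>g\<in>B. wnorm v (superpos \<phi> g) \<le> C"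
    using assms(4) BX BN unfolding superpos_bounded_def by blast
  have Cb: "v z * cmod (\<phi> (c * f z)) \<le> C" if "cmod c \<le> 2" "z \<in> ball 0 1" for c z
  proof -
    have gB: "(\<lambda>z. c * f z) \<in> B" using that unfolding B_def by blast
    hence "superpos \<phi> (\<lambda>z. c * f z) \<in> Hinf_v v" using assms(4) BX unfolding superpos_bounded_def by blast
    hence bd: "bdd_above ((\<lambda>z. v z * cmod (superpos \<phi> (\<lambda>z. c * f z) z)) ` ball 0 1)"
      unfolding Hinf_v_def by simp
    have "v z * cmod (superpos \<phi> (\<lambda>z. c * f z) z) \<le> wnorm v (superpos \<phi> (\<lambda>z. c * f z))"
      unfolding wnorm_def by (rule cSUP_upper[OF that(2) bd])
    also have "\<dots> \<le> C" using C gB by blast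
    finally show ?thesis by (simp add: superpos_def)
  qed
  have "compact (deriv \<phi> ` cball 0 1)"
  proof (rule compact_continuous_image)
    show "continuous_on (cball 0 1) (deriv \<phi>)"
      using holomorphic_on_imp_continuous_on[OF dh] by (rule continuous_on_subset) simp
  qed simp
  then obtain K where K0: "\<forall>y\<in>deriv \<phi> ` cball 0 1. cmod y \<le> K"
    using compact_imp_bounded bounded_iff by blast
  hence K: "\<forall>w\<in>cball 0 1. cmod (deriv \<phi> w) \<le> K" by simp
  have vpos: "\<forall>z\<in>ball 0 1. v z > 0" and vrad: "\<forall>z\<in>ball 0 1. v z = v (complex_of_real (norm z))"
    and anti: "strict_antimono_on {0..<1} (\<lambda>r::real. v (complex_of_real r))"
    using assms(1) unfolding weight_def by blast+
  have bound: "v z * cmod (deriv \<phi> (f z)) \<le> max C (K * v 0)" if z: "z \<in> ball 0 1" for z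
  proof (cases "cmod (f z) \<ge> 1")
    case True
    define a where "a = f z"
    have a0: "cmod a > 0" using True unfolding a_def by linarith
    have vz: "v z > 0" using vpos z by blast
    have an: "a \<noteq> 0" using a0 by auto
    have circ: "cmod (\<phi> x) \<le> C / v z" if "cmod (a - x) = cmod a" for x
    proof -
      define c where "c = x / a"
      have ax: "a - (a - x) = x" by simp
      have "cmod x \<le> cmod a + cmod (a - x)" using norm_triangle_ineq4[of a "a - x"] unfolding ax .
      hence x2: "cmod x \<le> 2 * cmod a" using that by linarith
      have "cmod c = cmod x / cmod a" unfolding c_def by (rule norm_divide)
      also have "\<dots> \<le> 2" using x2 by (subst pos_divide_le_eq[OF a0])
      finally have ineq: "v z * cmod (\<phi> (c * f z)) \<le> C" using Cb z by blast
      have eq: "c * f z = x" using an unfolding c_def a_def[symmetric] by simp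
      have "v z * cmod (\<phi> x) \<le> C" using ineq unfolding eq .
      hence "cmod (\<phi> x) * v z \<le> C" by (rule ord_eq_le_trans[OF mult.commute])
      thus ?thesis by (subst pos_le_divide_eq[OF vz])
    qed
    have "cmod ((deriv ^^ 1) \<phi> a) \<le> fact 1 * (C / v z) / cmod a ^ 1"
    proof (rule Cauchy_inequality)
      show "\<phi> holomorphic_on ball a (cmod a)" using assms(3) by (rule holomorphic_on_subset) simp
      show "continuous_on (cball a (cmod a)) \<phi>"
        using holomorphic_on_imp_continuous_on[OF assms(3)] by (rule continuous_on_subset) simp
    next
      show "0 < cmod a" by (rule a0)
    next
      fix x assume "cmod (a - x) = cmod a"
      thus "cmod (\<phi> x) \<le> C / v z" by (rule circ)
    qed
    moreover have "(deriv ^^ 1) \<phi> = deriv \<phi>" by simp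
    moreover have "fact 1 * (C / v z) / cmod a ^ 1 = (C / v z) / cmod a" by simp
    ultimately have d: "cmod (deriv \<phi> a) \<le> (C / v z) / cmod a" by (simp only:)
    have Cnn: "C / v z \<ge> 0" using circ[of 0] norm_ge_zero[of "\<phi> 0"] by (simp only: diff_zero) linarith
    have a1: "1 \<le> cmod a" using True unfolding a_def .
    have "(C / v z) / cmod a \<le> (C / v z) / 1"
      by (rule divide_left_mono[OF a1 Cnn]) (use a1 in linarith)
    hence "(C / v z) / cmod a \<le> C / v z" by (simp only: div_by_1)
    with d have "cmod (deriv \<phi> a) \<le> C / v z" by linarith
    hence "cmod (deriv \<phi> a) * v z \<le> C" using pos_le_divide_eq[OF vz] by blast
    hence "cmod (deriv \<phi> (f z)) * v z \<le> C" unfolding a_def .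
    hence "v z * cmod (deriv \<phi> (f z)) \<le> C" by (rule ord_eq_le_trans[OF mult.commute])
    thus ?thesis using max.cobounded1[of C "K * v 0"] by (rule order_trans)
  next
    case False
    have "cmod (deriv \<phi> (f z)) \<le> K" using K False by simp
    moreover have "v z \<le> v 0"
    proof (cases "norm z = 0")
      case True then show ?thesis by simp
    next
      case False
      have "v (complex_of_real (norm z)) < v (complex_of_real 0)"
      proof (rule monotone_onD[OF anti])
        show "0 \<in> {0..<(1::real)}" by simp
        show "norm z \<in> {0..<(1::real)}" using z by simp
        show "0 < norm z" using False by simp
      qed
      moreover have "v z = v (complex_of_real (norm z))" using vrad z by blast
      ultimately show ?thesis by simp
    qed
    moreover have "v z > 0" using vpos z by blast
    moreover have "K \<ge> 0" proof -
      have "cmod (deriv \<phi> 0) \<le> K" using K by simp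
      thus ?thesis using norm_ge_zero[of "deriv \<phi> 0"] by linarith
    qed
    ultimately have "v z * cmod (deriv \<phi> (f z)) \<le> v 0 * K"
      by (intro mult_mono) (simp_all add: less_imp_le)
    hence "v z * cmod (deriv \<phi> (f z)) \<le> K * v 0" by (subst (asm) mult.commute[of "v 0"])
    thus ?thesis by (rule max.coboundedI2)
  qed
  have "bdd_above ((\<lambda>z. v z * cmod ((deriv \<phi> \<circ> f) z)) ` ball 0 1)"
    using bound by (intro bdd_aboveI2) auto
  thus "superpos (deriv \<phi>) f \<in> Hinf_v v" using hol unfolding Hinf_v_def superpos_def by blast
qed

end
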